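(* Let $m,n\ge1$ be natural numbers. For $j=1,2$ let $\mathcal U_j$ be a non-principal ultrafilter on $\mathbb N$ and $(a^{(j)}_i,b^{(j)}_i)_{i\in\mathbb N}$ coprime natural numbers with $2\le a^{(j)}_i<b^{(j)}_i$ such that $S^{(j)}=\prod_{\mathcal U_j}\{xa^{(j)}_i+yb^{(j)}_i\}$ is a limit 2-semigroup with generators $a^{(j)},b^{(j)}$ in which $m\,b^{(j)}=\beta_n$, and such that the residue $\mathrm{res}_m(a^{(j)})$ of $a^{(j)}$ modulo $m$ is coprime to $m$. Suppose that $S^{(1)}$ and $S^{(2)}$ have the same residues of $a$ modulo every $N\ge1$, the same value of $q_0=r(a,b)$, and, in case $q_0=0$, the same $M_a$-residues of $\alpha(b)$ modulo every $N\ge1$. Then $S^{(1)}$ and $S^{(2)}$ have the same invariants, namely: the same residues of $b$ modulo every $N$; the same $M_b$-residues of $\beta_1$, the same $M_a$-residues of $\alpha_1$ and of $\alpha(b)$ modulo every $N$; and for all $p,q\in\mathbb N$ the same truth values of the statements $p\,a<q\,b$, of $p\,b<q\,\alpha(b)+q\,a$, and of $p\,\beta_1<q\,ab$. Furthermore, in any such limit 2-semigroup, $q_0=0$ or $q_0=m/k$ for some positive integer $k$.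
   Context: A standard 2-semigroup with coprime generators $2\le a<b$ is $\{xa+yb:x,y\in\mathbb N\}$ with $+,<,0$. A limit 2-semigroup is an ultraproduct $\prod_{\mathcal U}S_i$ of standard 2-semigroups $S_i$ (generators $a_i<b_i$) over a non-principal ultrafilter, not isomorphic to a standard semigroup, with generators $a=[(a_i)]$, $b=[(b_i)]$; it is assumed that $a$ exceeds every finite multiple of the minimal positive distance between elements. All the following notions are defined in each $S_i$ and interpreted coordinatewise in the ultraproduct. $ab$ is the product; $\alpha(b)=\lfloor b/a\rfloor a$; for $1\le n<b$, $\beta_n$ is the least multiple of $b$ that is $\equiv n\pmod a$ (i.e. $kb$ with $0\le k<a$, $kb\equiv n$), and $\alpha_n=\beta_n-n$; $p\,x$ denotes $x$ added to itself $p$ times. The residue of $x$ modulo $N$ is the $r<N$ with $x\equiv r\pmod N$ (in the ultraproduct: holding for $\mathcal U$-almost all coordinates). For a multiple $x=ta\le ab$ of $a$, its $M_a$-residue modulo $N$ is $t \bmod N$; for a multiple $x=tb\le ab$ of $b$, its $M_b$-residue modulo $N$ is $t\bmod N$. The ratio $q_0=r(a,b)=\sup\{p/q: p,q\in\mathbb Z_{\ge0}, q\neq0,\ p\,b\le q\,a\}$. *)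

theory Defs
  imports Complex_Main
begin

definition ultrafilter :: "nat filter \<Rightarrow> bool" where
  "ultrafilter U \<longleftrightarrow> U \<noteq> bot \<and> (\<forall>P. eventually P U \<or> eventually (\<lambda>i. \<not> P i) U)"

definition nonprincipal :: "nat filter \<Rightarrow> bool" where
  "nonprincipal U \<longleftrightarrow> (\<forall>n. \<not> eventually (\<lambda>i. i = n) U)"

definition sg :: "nat \<Rightarrow> nat \<Rightarrow> nat set" where
  "sg a b = {x * a + y * b | x y. True}"

definition min_dist :: "nat \<Rightarrow> nat \<Rightarrow> nat" where
  "min_dist a b = (LEAST d. 0 < d \<and> (\<exists>x\<in>sg a b. x + d \<in> sg a b))"

definition alpha_b :: "nat \<Rightarrow> nat \<Rightarrow> nat" where
  "alpha_b a b = (b div a) * a"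

definition beta :: "nat \<Rightarrow> nat \<Rightarrow> nat \<Rightarrow> nat" where
  "beta a b n = (LEAST k. (k * b) mod a = n mod a) * b"

definition alpha :: "nat \<Rightarrow> nat \<Rightarrow> nat \<Rightarrow> nat" where
  "alpha a b n = beta a b n - n"

(* Limit 2-semigroup: ultraproduct over U of the standard semigroups with
   generators a i < b i, with a exceeding every finite multiple of the
   minimal positive distance *)
definition limit2 :: "nat filter \<Rightarrow> (nat \<Rightarrow> nat) \<Rightarrow> (nat \<Rightarrow> nat) \<Rightarrow> bool" where
  "limit2 U a b \<longleftrightarrow> ultrafilter U \<and> nonprincipal U \<and>
     (\<forall>i. coprime (a i) (b i) \<and> 2 \<le> a i \<and> a i < b i) \<and>
     (\<forall>k::nat. eventually (\<lambda>i. k * min_dist (a i) (b i) < a i) U)"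

(* residue modulo N of the ultraproduct element [(x i)] *)
definition ures :: "nat filter \<Rightarrow> (nat \<Rightarrow> nat) \<Rightarrow> nat \<Rightarrow> nat" where
  "ures U x N = (THE r. r < N \<and> eventually (\<lambda>i. x i mod N = r) U)"

(* M_a-residue of a multiple x = t a, and M_b-residue of a multiple x = t b *)
definition Ma_res :: "nat filter \<Rightarrow> (nat \<Rightarrow> nat) \<Rightarrow> (nat \<Rightarrow> nat) \<Rightarrow> nat \<Rightarrow> nat" where
  "Ma_res U a x N = ures U (\<lambda>i. x i div a i) N"

definition Mb_res :: "nat filter \<Rightarrow> (nat \<Rightarrow> nat) \<Rightarrow> (nat \<Rightarrow> nat) \<Rightarrow> nat \<Rightarrow> nat" where
  "Mb_res U b x N = ures U (\<lambda>i. x i div b i) N"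

definition ratio :: "nat filter \<Rightarrow> (nat \<Rightarrow> nat) \<Rightarrow> (nat \<Rightarrow> nat) \<Rightarrow> real" where
  "ratio U a b = Sup {real p / real q | p q. q \<noteq> 0 \<and> eventually (\<lambda>i. p * b i \<le> q * a i) U}"

end

theory Submission
  imports Defs "HOL-Number_Theory.Cong"
begin


lemma uf_nonbot: "ultrafilter U \<Longrightarrow> U \<noteq> bot"
  by (simp add: ultrafilter_def)

lemma uf_fin:
  fixes f :: "nat \<Rightarrow> nat" and N :: nat
  assumes U: "ultrafilter U"
  shows "eventually (\<lambda>i. f i < N) U \<Longrightarrow> \<exists>r<N. eventually (\<lambda>i. f i = r) U"
proof (induction N)
  case 0
  then have "eventually (\<lambda>i. False) U" by simp
  then show ?case using U by (simp add: ultrafilter_def)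
next
  case (Suc N)
  from U have "eventually (\<lambda>i. f i = N) U \<or> eventually (\<lambda>i. \<not> f i = N) U"
    by (simp add: ultrafilter_def)
  then show ?case
  proof
    assume "eventually (\<lambda>i. f i = N) U" then show ?thesis by auto
  next
    assume "eventually (\<lambda>i. \<not> f i = N) U"
    with Suc.prems have "eventually (\<lambda>i. f i < N) U"
      by eventually_elim auto
    with Suc.IH show ?thesis by (meson less_SucI)
  qed
qed

lemma ev_const_eq:
  assumes "U \<noteq> bot" "eventually (\<lambda>i. f i = r) U" "eventually (\<lambda>i. f i = s) U"
  shows "r = s"
proof -
  have "eventually (\<lambda>i. r = s) U" using assms(2,3) by eventually_elim auto
  then show ?thesis using assms(1) by (simp add: eventually_const_iff)
qed

lemma ures_unique:
  assumes "U \<noteq> bot" "r < N" "eventually (\<lambda>i. x i mod N = r) U"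
  shows "ures U x N = r"
  unfolding ures_def
proof (rule the_equality)
  show "r < N \<and> eventually (\<lambda>i. x i mod N = r) U" using assms by auto
next
  fix r' assume "r' < N \<and> eventually (\<lambda>i. x i mod N = r') U"
  then show "r' = r" using ev_const_eq[OF assms(1) assms(3), of r'] by auto
qed

lemma ures_eq:
  assumes U: "ultrafilter U" and N: "0 < N"
  shows "eventually (\<lambda>i. x i mod N = ures U x N) U"
proof -
  have "eventually (\<lambda>i. x i mod N < N) U" using N by simp
  then obtain r where r: "r < N" "eventually (\<lambda>i. x i mod N = r) U"
    using uf_fin[OF U, of "\<lambda>i. x i mod N" N] by blast
  then have "ures U x N = r" using ures_unique uf_nonbot[OF U] by blast
  then show ?thesis using r by simp
qed

lemma ures_same:
  assumes "U1 \<noteq> bot" "U2 \<noteq> bot" "eventually (\<lambda>i. x i mod N = v) U1"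
    "eventually (\<lambda>i. y i mod N = v) U2" "0 < N"
  shows "ures U1 x N = ures U2 y N"
proof -
  obtain i where "x i mod N = v" using assms(1,3) eventually_happens by blast
  then have "v < N" using assms(5) by auto
  then show ?thesis using ures_unique assms by metis
qed

lemma ev_iff_const:
  assumes "U \<noteq> bot" "eventually (\<lambda>i. P i = B) U"
  shows "eventually P U \<longleftrightarrow> B"
proof
  assume "eventually P U"
  then have "eventually (\<lambda>i. B) U" by (rule eventually_elim2[OF assms(2)]) auto
  then show B using assms(1) by (simp add: eventually_const_iff)
next
  assume B
  show "eventually P U" by (rule eventually_mono[OF assms(2)]) (use \<open>B\<close> in auto)
qed

lemma beta_props:
  fixes a b r :: nat
  assumes "coprime a b" "1 \<le> a"
  defines "k \<equiv> LEAST k. (k * b) mod a = r mod a"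
  shows "k < a" "(k * b) mod a = r mod a" "\<And>k'. (k' * b) mod a = r mod a \<Longrightarrow> k \<le> k'"
    "beta a b r = k * b"
proof -
  obtain x where x: "[b * x = Suc 0] (mod a)" using cong_solve_coprime_nat assms(1)
    by (metis coprime_commute)
  define k0 where "k0 = (x * r) mod a"
  have "[k0 * b = x * r * b] (mod a)" unfolding k0_def by (simp add: cong_def mod_mult_left_eq)
  moreover have "[x * r * b = r * (b * x)] (mod a)" by (simp add: ac_simps)
  moreover have "[r * (b * x) = r * 1] (mod a)" using cong_mult[OF cong_refl[of r] x] by simp
  ultimately have "[k0 * b = r] (mod a)" by (metis cong_trans mult_1_right One_nat_def)
  then have e: "(k0 * b) mod a = r mod a" by (simp add: cong_def)
  show "(k * b) mod a = r mod a" unfolding k_def by (rule LeastI[of _ k0], rule e)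
  show "\<And>k'. (k' * b) mod a = r mod a \<Longrightarrow> k \<le> k'" unfolding k_def by (rule Least_le)
  have "k \<le> k0" unfolding k_def by (rule Least_le, rule e)
  also have "k0 < a" unfolding k0_def using assms(2) by simp
  finally show "k < a" .
  show "beta a b r = k * b" unfolding beta_def k_def by simp
qed




lemma uniq_sol:
  fixes x y r e M :: nat
  assumes "coprime r M" "(x*r + e) mod M = 0" "(y*r + e) mod M = 0" "x < M" "y < M"
  shows "x = y"
proof -
  have "[x*r + e = y*r + e] (mod M)" using assms(2,3) by (simp add: cong_def)
  then have "[x*r = y*r] (mod M)" by (simp add: cong_add_rcancel_nat)
  then have "[x = y] (mod M)" using cong_mult_rcancel_nat assms(1) by blast
  then show ?thesis using cong_less_modulus_unique_nat assms(4,5) by blast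
qed

lemma ar_ratio_fin:
  fixes m b k a n p q :: nat
  assumes "m*b = k*a + n" "p*n < a" "0<m" "0<q" "0<n"
  shows "p*b \<le> q*a \<longleftrightarrow> p*k < q*m"
proof -
  have E: "m*(p*b) = (p*k)*a + p*n"
  proof -
    have "m*(p*b) = p*(m*b)" by (simp only: mult.left_commute)
    also have "\<dots> = p*(k*a+n)" using assms(1) by simp
    finally show ?thesis by (simp add: algebra_simps)
  qed
  have F: "m*(q*a) = (q*m)*a" by (simp add: ac_simps)
  have iff: "p*b \<le> q*a \<longleftrightarrow> m*(p*b) \<le> m*(q*a)" using assms(3) by simp
  show ?thesis
  proof
    assume h: "p*b \<le> q*a"
    then have G: "(p*k)*a + p*n \<le> (q*m)*a" using iff E F by simp
    show "p*k < q*m"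
    proof (rule ccontr)
      assume c: "\<not> p*k < q*m"
      then have "(q*m)*a \<le> (p*k)*a" by (intro mult_right_mono) auto
      then have "p*n = 0" using G by linarith
      then have "p = 0" using assms(5) by simp
      then show False using c assms by simp
    qed
  next
    assume h: "p*k < q*m"
    then have "(p*k+1)*a \<le> (q*m)*a" by (intro mult_right_mono) auto
    then have "(p*k)*a + p*n < (q*m)*a" using assms(2) by (simp add: algebra_simps)
    then show "p*b \<le> q*a" using iff E F by simp
  qed
qed

lemma ar_ratio_inf:
  fixes m b t a n p q :: nat
  assumes "m*b = t*a + n" "m*q < t" "0<m" "0<p" "0 < a"
  shows "\<not> p*b \<le> q*a"
proof
  assume "p*b \<le> q*a"
  then have 1: "m*(p*b) \<le> m*(q*a)" by simp
  have 2: "m*b \<le> m*(p*b)" using assms(4) by simp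
  have 3: "(m*q)*a < t*a" using assms(2,5) by simp
  have 4: "m*(q*a) = (m*q)*a" by simp
  show False using 1 2 3 4 assms(1) by linarith
qed

lemma ar_c1_fin:
  fixes m b k a n p q :: nat
  assumes "m*b = k*a + n" "q*n < a" "0<m" "0<n"
  shows "p*a < q*b \<longleftrightarrow> m*p \<le> q*k \<and> 0<q"
proof -
  have E: "m*(q*b) = (q*k)*a + q*n"
  proof -
    have "m*(q*b) = q*(m*b)" by (simp only: mult.left_commute)
    also have "\<dots> = q*(k*a+n)" using assms(1) by simp
    finally show ?thesis by (simp add: algebra_simps)
  qed
  have F: "m*(p*a) = (m*p)*a" by (simp add: ac_simps)
  have e: "p*a < q*b \<longleftrightarrow> (m*p)*a < (q*k)*a + q*n"
  proof -
    have "p*a < q*b \<longleftrightarrow> m*(p*a) < m*(q*b)" using assms(3) by simp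
    then show ?thesis using E F by simp
  qed
  show ?thesis
  proof (cases "m*p \<le> q*k")
    case True
    then have 1: "(m*p)*a \<le> (q*k)*a" by (simp add: mult_right_mono)
    show ?thesis
    proof (cases "q = 0")
      case True then show ?thesis by simp
    next
      case False
      then have "0 < q*n" using assms(4) by simp
      then have "(m*p)*a < (q*k)*a + q*n" using 1 by linarith
      then show ?thesis using e False True by simp
    qed
  next
    case False
    then have "(q*k+1)*a \<le> (m*p)*a" by (intro mult_right_mono) auto
    then show ?thesis using e False assms(2) by (simp add: algebra_simps)
  qed
qed

lemma ar_c1_inf:
  fixes m b t a n p q :: nat
  assumes "m*b = t*a + n" "m*p < t" "0<m" "0 < a"
  shows "p*a < q*b \<longleftrightarrow> 0 < q"
proof
  assume "p*a < q*b" then show "0<q" by (cases "q=0") auto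
next
  assume "0<q"
  have "(m*p)*a < t*a" using assms(2,4) by simp
  moreover have "m*(p*a) = (m*p)*a" by simp
  ultimately have "m*(p*a) < m*b" using assms(1) by linarith
  then have "p*a < b" using assms(3) by simp
  also have "b \<le> q*b" using \<open>0<q\<close> by simp
  finally show "p*a < q*b" .
qed

lemma ar_bdiv:
  fixes m b t a n :: nat
  assumes "m*b = t*a + n" "n < a" "0<m"
  shows "b div a = t div m"
proof -
  define u s where "u = t div m" and "s = t mod m"
  have t: "t = m*u + s" unfolding u_def s_def by simp
  have s: "s + 1 \<le> m" unfolding s_def using assms(3) by (simp add: Suc_leI)
  have "m*(a*u) \<le> m*b" using assms(1) t by (simp add: algebra_simps)
  then have l: "a*u \<le> b" using assms(3) by simp
  have "(s+1)*a \<le> m*a" using s by (rule mult_right_mono) simp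
  then have "s*a + n < m*a" using assms(2) by (simp add: algebra_simps)
  then have "m*b < m*(a * Suc u)" using assms(1) t by (simp add: algebra_simps)
  then have "b < a * Suc u" using assms(3) by simp
  then show ?thesis using div_nat_eqI l unfolding u_def by blast
qed

lemma ar_c2_fin:
  fixes m b k a n p q :: nat
  assumes "m*b = k*a + n" "p*n < a" "0<m" "b div a = k div m"
  shows "p*b < q*(b div a * a) + q*a \<longleftrightarrow> p*k < m*q*(k div m + 1)"
proof -
  define Q where "Q = m*q*(k div m + 1)"
  have E: "m*(p*b) = (p*k)*a + p*n"
  proof -
    have "m*(p*b) = p*(m*b)" by (simp only: mult.left_commute)
    also have "\<dots> = p*(k*a+n)" using assms(1) by simp
    finally show ?thesis by (simp add: algebra_simps)
  qed
  have F: "m*(q*(b div a * a) + q*a) = Q*a" unfolding Q_def assms(4) by (simp add: algebra_simps)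
  have e: "p*b < q*(b div a * a) + q*a \<longleftrightarrow> (p*k)*a + p*n < Q*a"
  proof -
    have "p*b < q*(b div a * a) + q*a \<longleftrightarrow> m*(p*b) < m*(q*(b div a * a) + q*a)"
      using assms(3) by simp
    then show ?thesis using E F by simp
  qed
  show ?thesis
  proof (cases "p*k < Q")
    case True
    then have "(p*k+1)*a \<le> Q*a" by (intro mult_right_mono) auto
    then show ?thesis using e True assms(2) unfolding Q_def[symmetric] by (simp add: algebra_simps)
  next
    case False
    then have "Q*a \<le> (p*k)*a" by (intro mult_right_mono) auto
    then have "\<not> (p*k)*a + p*n < Q*a" by linarith
    then show ?thesis using e False unfolding Q_def[symmetric] by simp
  qed
qed

lemma ar_c2_inf:
  fixes m b t a n p q :: nat
  assumes "m*b = t*a + n" "q*m < t" "p*n < a" "0<m" "b div a = t div m"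
  shows "p*b < q*(b div a * a) + q*a \<longleftrightarrow> p \<le> q \<and> 0 < q"
proof -
  define T where "T = m*(t div m + 1)"
  have T1: "t + 1 \<le> T" unfolding T_def
  proof -
    have "t mod m < m" using assms(4) by simp
    moreover have "m*(t div m) + t mod m = t" by simp
    moreover have "m*(t div m + 1) = m*(t div m) + m" by simp
    ultimately show "t + 1 \<le> m*(t div m + 1)" by linarith
  qed
  have T2: "T \<le> t + m" unfolding T_def
  proof -
    have "m*(t div m) + t mod m = t" by simp
    moreover have "m*(t div m + 1) = m*(t div m) + m" by simp
    ultimately show "m*(t div m + 1) \<le> t + m" by linarith
  qed
  have e: "p*b < q*(b div a * a) + q*a \<longleftrightarrow> (p*t)*a + p*n < (q*T)*a"
  proof -
    have "p*b < q*(b div a * a) + q*a \<longleftrightarrow> m*(p*b) < m*(q*(b div a * a) + q*a)"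
      using assms(4) by simp
    moreover have "m*(p*b) = (p*t)*a + p*n"
    proof -
      have "m*(p*b) = p*(m*b)" by (simp only: mult.left_commute)
      also have "\<dots> = p*(t*a+n)" using assms(1) by simp
      finally show ?thesis by (simp add: algebra_simps)
    qed
    moreover have "m*(q*(b div a * a) + q*a) = (q*T)*a" unfolding T_def assms(5) by (simp add: algebra_simps)
    ultimately show ?thesis by simp
  qed
  show ?thesis
  proof (cases "p \<le> q \<and> 0 < q")
    case True
    have "q*(t+1) \<le> q*T" using T1 by (rule mult_left_mono) simp
    then have "(q*(t+1))*a \<le> (q*T)*a" by (rule mult_right_mono) simp
    moreover have "(p*t)*a \<le> (q*t)*a" using True by (intro mult_right_mono) auto
    moreover have "(q*(t+1))*a = (q*t)*a + q*a" by (simp add: algebra_simps)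
    moreover have "a \<le> q*a" using True by simp
    ultimately have "(p*t)*a + p*n < (q*T)*a" using assms(3) by linarith
    then show ?thesis using e True by simp
  next
    case False
    show ?thesis
    proof (cases "q = 0")
      case True then show ?thesis using e by simp
    next
      case q: False
      then have "q + 1 \<le> p" using False by simp
      then have "(q+1)*t \<le> p*t" by (rule mult_right_mono) simp
      then have "((q+1)*t)*a \<le> (p*t)*a" by (rule mult_right_mono) simp
      moreover have "q*T \<le> q*(t+m)" using T2 by (rule mult_left_mono) simp
      then have "(q*T)*a \<le> (q*(t+m))*a" by (rule mult_right_mono) simp
      moreover have "(q*m)*a \<le> t*a" using assms(2) by (intro mult_right_mono) auto
      moreover have "((q+1)*t)*a = (q*t)*a + t*a" by (simp add: algebra_simps)
      moreover have "(q*(t+m))*a = (q*t)*a + (q*m)*a" by (simp add: algebra_simps)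
      ultimately have "(q*T)*a \<le> (p*t)*a" by linarith
      then have "\<not> (p*t)*a + p*n < (q*T)*a" by linarith
      then show ?thesis using e False by simp
    qed
  qed
qed

lemma ar_c3:
  fixes m b K a n p q C :: nat
  assumes "n*K = m + C*a" "p*m < a" "0<n" "0<b"
  shows "p*(K*b) < q*(a*b) \<longleftrightarrow> p*C < n*q"
proof -
  have "p*(K*b) < q*(a*b) \<longleftrightarrow> p*K < q*a" using assms(4) by simp
  also have "\<dots> \<longleftrightarrow> n*(p*K) < n*(q*a)" using assms(3) by simp
  also have "n*(p*K) = p*m + (p*C)*a"
  proof -
    have "n*(p*K) = p*(n*K)" by (simp only: mult.left_commute)
    also have "\<dots> = p*(m + C*a)" using assms(1) by simp
    finally show ?thesis by (simp add: algebra_simps)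
  qed
  also have "n*(q*a) = (n*q)*a" by simp
  finally have e: "p*(K*b) < q*(a*b) \<longleftrightarrow> p*m + (p*C)*a < (n*q)*a" .
  show ?thesis
  proof (cases "p*C < n*q")
    case True
    then have "(p*C+1)*a \<le> (n*q)*a" by (intro mult_right_mono) auto
    then show ?thesis using e True assms(2) by (simp add: algebra_simps)
  next
    case False
    then have "(n*q)*a \<le> (p*C)*a" by (intro mult_right_mono) auto
    then have "\<not> p*m + (p*C)*a < (n*q)*a" by linarith
    then show ?thesis using e False by simp
  qed
qed

lemma ar_m1:
  fixes m b t a n N :: nat
  assumes "m*b = t*a + n" "0<m"
  shows "b mod N = ((t mod (m*N)) * (a mod (m*N)) + n) mod (m*N) div m"
proof -
  have "((t mod (m*N)) * (a mod (m*N)) + n) mod (m*N) = (t*a+n) mod (m*N)"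
  proof -
    have 1: "[t mod (m*N) = t] (mod (m*N))" "[a mod (m*N) = a] (mod (m*N))" by (simp_all add: cong_def)
    have "[(t mod (m*N)) * (a mod (m*N)) + n = t*a+n] (mod (m*N))"
      by (intro cong_add cong_mult cong_refl 1)
    then show ?thesis by (simp add: cong_def)
  qed
  also have "\<dots> = (m*b) mod (m*N)" using assms(1) by simp
  also have "\<dots> = m * (b mod N)" by (rule mod_mult_mult1)
  finally show ?thesis using assms(2) by simp
qed

lemma ar_m2:
  fixes m K C a n N :: nat
  assumes "n*K = m + C*a" "0<n"
  shows "K mod N = ((m + C*(a mod (n*N))) mod (n*N)) div n"
proof -
  have "(m + C*(a mod (n*N))) mod (n*N) = (m + C*a) mod (n*N)"
  proof -
    have 1: "[a mod (n*N) = a] (mod (n*N))" by (simp_all add: cong_def)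
    have "[m + C*(a mod (n*N)) = m + C*a] (mod (n*N))"
      by (intro cong_add cong_mult cong_refl 1)
    then show ?thesis by (simp add: cong_def)
  qed
  also have "\<dots> = (n*K) mod (n*N)" using assms(1) by simp
  also have "\<dots> = n * (K mod N)" by (rule mod_mult_mult1)
  finally show ?thesis using assms(2) by simp
qed

lemma ar_m3:
  fixes m b t a n K C w N :: nat
  assumes "m*b = t*a + n" "n*K = m + C*a" "K*b = a*w + 1" "0<m" "0<n" "0<a"
  defines "L \<equiv> m*n*N"
  shows "w mod N = ((m*(t mod L) + C*n + C*(t mod L)*(a mod L)) mod L) div (m*n)"
proof -
  have "m*n*(K*b) = (n*K)*(m*b)" by (simp add: ac_simps)
  also have "\<dots> = (m + C*a)*(t*a+n)" using assms(1,2) by simp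
  finally have "m*n*(a*w) + m*n = a*(m*t + C*n + C*t*a) + m*n"
    using assms(3) by (simp add: algebra_simps)
  then have "a*(m*n*w) = a*(m*t + C*n + C*t*a)" by (simp add: ac_simps)
  then have wq: "m*n*w = m*t + C*n + C*t*a" using assms(6) by simp
  have "(m*(t mod L) + C*n + C*(t mod L)*(a mod L)) mod L = (m*t + C*n + C*t*a) mod L"
  proof -
    have 1: "[t mod L = t] (mod L)" "[a mod L = a] (mod L)" by (simp_all add: cong_def)
    have "[m*(t mod L) + C*n + C*(t mod L)*(a mod L) = m*t + C*n + C*t*a] (mod L)"
      by (intro cong_add cong_mult cong_refl 1)
    then show ?thesis by (simp add: cong_def)
  qed
  also have "\<dots> = (m*n*w) mod (m*n*N)" using wq unfolding L_def by simp
  also have "\<dots> = m*n*(w mod N)" by (rule mod_mult_mult1)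
  finally show ?thesis using assms(4,5) unfolding L_def by simp
qed

lemma ar_m4:
  fixes t m N :: nat
  shows "t div m mod N = (t mod (m*N)) div m"
proof (cases "m = 0")
  case True then show ?thesis by simp
next
  case False
  have "t mod (m*N) = m * (t div m mod N) + t mod m" by (rule mod_mult2_eq)
  then show ?thesis using False by simp
qed

lemma ar_tmod:
  fixes t m M :: nat
  shows "t mod M = (m * (t div m mod M) + t mod m) mod M"
proof -
  have "t mod M = (t mod (m*M)) mod M" by (simp add: mod_mod_cancel)
  then show ?thesis by (simp add: mod_mult2_eq)
qed




lemma sup_fin:
  fixes m k :: nat
  assumes "0 < k" "0 < m"
  shows "Sup {real p / real q | p q. q \<noteq> 0 \<and> p*k < q*m} = real m / real k"
proof (rule cSup_eq)
  fix x assume "x \<in> {real p / real q | p q. q \<noteq> 0 \<and> p*k < q*m}"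
  then obtain p q where x: "x = real p / real q" "q \<noteq> 0" "p*k < q*m" by blast
  have "real p * real k < real q * real m" using x(3) by (metis of_nat_less_iff of_nat_mult)
  moreover have "0 < real q" "0 < real k" using x(2) assms(1) by auto
  ultimately show "x \<le> real m / real k" unfolding x(1) by (simp add: field_simps)
next
  fix y assume ub: "\<And>x. x \<in> {real p / real q | p q. q \<noteq> 0 \<and> p*k < q*m} \<Longrightarrow> x \<le> y"
  show "real m / real k \<le> y"
  proof (rule ccontr)
    assume "\<not> real m / real k \<le> y"
    then have "0 < real m / real k - y" by simp
    then obtain N where N: "inverse (real (Suc N)) < real m / real k - y"
      using reals_Archimedean by blast
    define j where "j = Suc N"
    have j: "0 < j" unfolding j_def by simp
    have mj: "1 \<le> m*j" using assms(2) j by simp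
    have lt: "(m*j - 1)*k < (k*j)*m"
    proof -
      have "(m*j - 1)*k = m*j*k - k" by (simp add: diff_mult_distrib)
      also have "\<dots> < m*j*k" using assms(1) mj by (simp add: diff_less)
      finally show ?thesis by (simp add: ac_simps)
    qed
    have "k*j \<noteq> 0" using assms(1) j by simp
    then have mem: "real (m*j - 1) / real (k*j) \<in> {real p / real q | p q. q \<noteq> 0 \<and> p*k < q*m}"
      using lt by blast
    have "real (m*j - 1) / real (k*j) = real m / real k - 1 / (real k * real j)"
      using mj assms(1) j by (simp add: of_nat_diff field_simps)
    moreover have "1 / (real k * real j) \<le> inverse (real j)"
      using assms(1) j by (simp add: field_simps)
    ultimately have "y < real (m*j - 1) / real (k*j)" using N unfolding j_def[symmetric] by linarith
    then show False using ub[OF mem] by simp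
  qed
qed

lemma min_dist_pos:
  fixes a b :: nat
  assumes "0 < a"
  shows "0 < min_dist a b"
proof -
  have 0: "(0::nat) \<in> sg a b" unfolding sg_def by (rule CollectI, rule exI[of _ 0], rule exI[of _ 0]) simp
  have 1: "0 + a \<in> sg a b" unfolding sg_def by (rule CollectI, rule exI[of _ 1], rule exI[of _ 0]) simp
  have "\<exists>d. 0 < d \<and> (\<exists>x\<in>sg a b. x + d \<in> sg a b)" using 0 1 assms by blast
  then show ?thesis unfolding min_dist_def by (rule LeastI2_ex) auto
qed

locale S2 =
  fixes m n :: nat and U :: "nat filter" and a b :: "nat \<Rightarrow> nat"
  assumes m1: "1 \<le> m" and n1: "1 \<le> n" and lim: "limit2 U a b"
    and beq: "eventually (\<lambda>i. m * b i = beta (a i) (b i) n) U"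
    and cop: "coprime (ures U a m) m"
begin

lemma uf: "ultrafilter U" using lim limit2_def by auto
lemma nb: "U \<noteq> bot" using uf uf_nonbot by auto
lemma ab: "2 \<le> a i" "a i < b i" "coprime (a i) (b i)" using lim unfolding limit2_def by auto

lemma big: "eventually (\<lambda>i. K < a i) U"
proof -
  have "eventually (\<lambda>i. K * min_dist (a i) (b i) < a i) U" using lim unfolding limit2_def by auto
  then show ?thesis
  proof (rule eventually_mono)
    fix i assume h: "K * min_dist (a i) (b i) < a i"
    have "0 < min_dist (a i) (b i)" using ab(1)[of i] by (intro min_dist_pos) simp
    then have "K * 1 \<le> K * min_dist (a i) (b i)" by (intro mult_le_mono2) simp
    then show "K < a i" using h by linarith
  qed
qed

definition "tt i = m * b i div a i"
definition "K1 i = beta (a i) (b i) 1 div b i"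
definition "cc i = n * K1 i div a i"

lemma teq: "eventually (\<lambda>i. m * b i = tt i * a i + n) U"
proof -
  have "eventually (\<lambda>i. m * b i = beta (a i) (b i) n \<and> n < a i) U"
    using beq big by (rule eventually_conj)
  then show ?thesis
  proof (rule eventually_mono)
    fix i assume h: "m * b i = beta (a i) (b i) n \<and> n < a i"
    have c: "coprime (a i) (b i)" "1 \<le> a i" using ab[of i] by auto
    define k where "k = (LEAST k. (k * b i) mod a i = n mod a i)"
    have "beta (a i) (b i) n = k * b i" unfolding k_def by (rule beta_props(4)[OF c])
    then have "m = k" using h ab(2)[of i] by simp
    moreover have "(k * b i) mod a i = n mod a i" unfolding k_def by (rule beta_props(2)[OF c])
    ultimately have "(m * b i) mod a i = n" using h by simp
    then show "m * b i = tt i * a i + n" unfolding tt_def by (metis div_mult_mod_eq)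
  qed
qed

lemma copm: "eventually (\<lambda>i. coprime (a i) m) U"
proof -
  have "eventually (\<lambda>i. a i mod m = ures U a m) U" using ures_eq[OF uf, of m a] m1 by simp
  then show ?thesis
  proof (rule eventually_mono)
    fix i assume "a i mod m = ures U a m"
    then have "coprime (a i mod m) m" using cop by simp
    then show "coprime (a i) m" using m1 by simp
  qed
qed

lemma copn: "eventually (\<lambda>i. coprime (a i) n) U"
proof -
  have "eventually (\<lambda>i. m * b i = tt i * a i + n \<and> coprime (a i) m) U"
    using teq copm by (rule eventually_conj)
  then show ?thesis
  proof (rule eventually_mono)
    fix i assume h: "m * b i = tt i * a i + n \<and> coprime (a i) m"
    have "coprime (a i) (m * b i)" using conjunct2[OF h] ab(3)[of i] by simp
    then have "coprime (a i) (tt i * a i + n)" by (simp only: conjunct1[OF h, symmetric])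
    then have "gcd (a i) (tt i * a i + n) = 1" by (simp add: coprime_iff_gcd_eq_1)
    then have "gcd (a i) n = 1" by (simp add: gcd_add_mult)
    then show "coprime (a i) n" by (simp add: coprime_iff_gcd_eq_1)
  qed
qed

lemma K1: "K1 i < a i" "(K1 i * b i) mod a i = 1" "beta (a i) (b i) 1 = K1 i * b i"
proof -
  have c: "coprime (a i) (b i)" "1 \<le> a i" using ab[of i] by auto
  define k where "k = (LEAST k. (k * b i) mod a i = 1 mod a i)"
  have e: "beta (a i) (b i) 1 = k * b i" unfolding k_def by (rule beta_props(4)[OF c])
  have "K1 i = k" unfolding K1_def e using ab(2)[of i] by simp
  moreover have "k < a i" unfolding k_def by (rule beta_props(1)[OF c])
  moreover have "(k * b i) mod a i = 1 mod a i" unfolding k_def by (rule beta_props(2)[OF c])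
  ultimately show "K1 i < a i" "(K1 i * b i) mod a i = 1" "beta (a i) (b i) 1 = K1 i * b i"
    using e ab(1)[of i] by auto
qed

lemma cc_lt: "cc i < n"
proof -
  have "n * K1 i < n * a i" using K1(1)[of i] n1 by simp
  then show ?thesis unfolding cc_def by (simp add: less_mult_imp_div_less mult.commute)
qed

lemma nK: "eventually (\<lambda>i. n * K1 i = m + cc i * a i) U"
proof -
  have "eventually (\<lambda>i. m * b i = tt i * a i + n \<and> m < a i) U"
    using teq big by (rule eventually_conj)
  then show ?thesis
  proof (rule eventually_mono)
    fix i assume h: "m * b i = tt i * a i + n \<and> m < a i"
    have "[K1 i * b i = 1] (mod a i)" using K1(2)[of i] ab(1)[of i] by (simp add: cong_def)
    then have "[n * (K1 i * b i) = n * 1] (mod a i)" by (rule cong_scalar_left)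
    moreover have "[m * b i = n] (mod a i)" using h by (simp add: cong_def)
    ultimately have "[(n * K1 i) * b i = m * b i] (mod a i)"
      by (metis cong_sym cong_trans mult.assoc mult_1_right)
    then have "[n * K1 i = m] (mod a i)" using cong_mult_rcancel_nat ab(3)[of i]
      by (metis coprime_commute)
    then have "(n * K1 i) mod a i = m" using h by (simp add: cong_def)
    then show "n * K1 i = m + cc i * a i" unfolding cc_def by (metis add.commute div_mult_mod_eq)
  qed
qed

lemma ccmod: "eventually (\<lambda>i. (cc i * (a i mod n) + m) mod n = 0) U"
  using nK
proof (rule eventually_mono)
  fix i assume h: "n * K1 i = m + cc i * a i"
  have 1: "[a i mod n = a i] (mod n)" by (simp add: cong_def)
  have "[cc i * (a i mod n) + m = cc i * a i + m] (mod n)"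
    by (intro cong_add cong_mult cong_refl 1)
  moreover have "(cc i * a i + m) mod n = 0" using h by (metis add.commute mod_mult_self1_is_0)
  ultimately show "(cc i * (a i mod n) + m) mod n = 0" by (simp add: cong_def)
qed

lemma tmodm: "eventually (\<lambda>i. ((tt i mod m) * (a i mod m) + n) mod m = 0) U"
  using teq
proof (rule eventually_mono)
  fix i assume h: "m * b i = tt i * a i + n"
  have 1: "[tt i mod m = tt i] (mod m)" "[a i mod m = a i] (mod m)" by (simp_all add: cong_def)
  have "[(tt i mod m) * (a i mod m) + n = tt i * a i + n] (mod m)"
    by (intro cong_add cong_mult cong_refl 1)
  moreover have "(tt i * a i + n) mod m = 0" using h by (metis mod_mult_self1_is_0)
  ultimately show "((tt i mod m) * (a i mod m) + n) mod m = 0" by (simp add: cong_def)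
qed

lemma t_cases: "(\<exists>k. eventually (\<lambda>i. tt i = k) U) \<or> (\<forall>K. eventually (\<lambda>i. K < tt i) U)"
proof (rule disjCI)
  assume "\<not> (\<forall>K. eventually (\<lambda>i. K < tt i) U)"
  then obtain K where "\<not> eventually (\<lambda>i. K < tt i) U" by blast
  then have "eventually (\<lambda>i. \<not> K < tt i) U" using uf unfolding ultrafilter_def by blast
  then have "eventually (\<lambda>i. tt i < Suc K) U" by (rule eventually_mono) auto
  then show "\<exists>k. eventually (\<lambda>i. tt i = k) U" using uf_fin[OF uf] by blast
qed

lemma ratio_fin:
  assumes k: "eventually (\<lambda>i. tt i = k) U"
  shows "0 < k" "ratio U a b = real m / real k"
proof -
  show kp: "0 < k"
  proof (rule ccontr)
    assume "\<not> 0 < k"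
    have "eventually (\<lambda>i. tt i = k \<and> m * b i = tt i * a i + n \<and> n < a i) U"
      using k teq big by (intro eventually_conj)
    then have "eventually (\<lambda>i. False) U"
    proof (rule eventually_mono)
      fix i assume h: "tt i = k \<and> m * b i = tt i * a i + n \<and> n < a i"
      then have "m * b i = n" using \<open>\<not> 0 < k\<close> by simp
      moreover have "b i \<le> m * b i" using m1 by simp
      ultimately show False using h ab(2)[of i] by simp
    qed
    then show False using nb by simp
  qed
  have key: "eventually (\<lambda>i. p * b i \<le> q * a i) U \<longleftrightarrow> p*k < q*m" if q: "q \<noteq> 0" for p q
  proof (rule ev_iff_const[OF nb])
    have "eventually (\<lambda>i. tt i = k \<and> m * b i = tt i * a i + n \<and> p*n < a i) U"
      using k teq big by (intro eventually_conj)
    then show "eventually (\<lambda>i. (p * b i \<le> q * a i) = (p*k < q*m)) U"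
      by (rule eventually_mono) (use ar_ratio_fin[of m _ k _ n p q] q m1 n1 in auto)
  qed
  have "{real p / real q | p q. q \<noteq> 0 \<and> eventually (\<lambda>i. p * b i \<le> q * a i) U}
      = {real p / real q | p q. q \<noteq> 0 \<and> p*k < q*m}" using key by blast
  then show "ratio U a b = real m / real k" unfolding ratio_def using sup_fin kp m1 by simp
qed

lemma ratio_inf:
  assumes inf: "\<forall>K. eventually (\<lambda>i. K < tt i) U"
  shows "ratio U a b = 0"
proof -
  have key: "eventually (\<lambda>i. p * b i \<le> q * a i) U \<longleftrightarrow> p = 0" for p q
  proof (rule ev_iff_const[OF nb])
    have "eventually (\<lambda>i. m*q < tt i \<and> m * b i = tt i * a i + n) U"
      using inf teq by (intro eventually_conj) auto
    then show "eventually (\<lambda>i. (p * b i \<le> q * a i) = (p = 0)) U"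
    proof (rule eventually_mono)
      fix i assume h: "m*q < tt i \<and> m * b i = tt i * a i + n"
      show "(p * b i \<le> q * a i) = (p = 0)"
      proof (cases "p = 0")
        case False
        then show ?thesis using ar_ratio_inf[of m "b i" "tt i" "a i" n q p] h m1 ab(1)[of i] by auto
      qed simp
    qed
  qed
  have "{real p / real q | p q. q \<noteq> 0 \<and> eventually (\<lambda>i. p * b i \<le> q * a i) U} = {0}"
  proof
    show "{real p / real q | p q. q \<noteq> 0 \<and> eventually (\<lambda>i. p * b i \<le> q * a i) U} \<subseteq> {0}"
      using key by auto
    have "real 0 / real 1 \<in> {real p / real q | p q. q \<noteq> 0 \<and> eventually (\<lambda>i. p * b i \<le> q * a i) U}"
      using key by blast
    then show "{0} \<subseteq> {real p / real q | p q. q \<noteq> 0 \<and> eventually (\<lambda>i. p * b i \<le> q * a i) U}" by simp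
  qed
  then show ?thesis unfolding ratio_def by simp
qed

lemma second: "ratio U a b = 0 \<or> (\<exists>k::nat. 0 < k \<and> ratio U a b = real m / real k)"
  using t_cases ratio_fin ratio_inf by blast

end




context S2
begin

lemma cmp1_fin:
  assumes k: "eventually (\<lambda>i. tt i = k) U"
  shows "eventually (\<lambda>i. p * a i < q * b i) U \<longleftrightarrow> (m*p \<le> q*k \<and> 0 < q)"
proof (rule ev_iff_const[OF nb])
  have "eventually (\<lambda>i. tt i = k \<and> m * b i = tt i * a i + n \<and> q*n < a i) U"
    using k teq big by (intro eventually_conj)
  then show "eventually (\<lambda>i. (p * a i < q * b i) = (m*p \<le> q*k \<and> 0 < q)) U"
    by (rule eventually_mono) (use ar_c1_fin[of m _ k _ n q p] m1 n1 in auto)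
qed

lemma cmp1_inf:
  assumes inf: "\<forall>K. eventually (\<lambda>i. K < tt i) U"
  shows "eventually (\<lambda>i. p * a i < q * b i) U \<longleftrightarrow> 0 < q"
proof (rule ev_iff_const[OF nb])
  have "eventually (\<lambda>i. m*p < tt i \<and> m * b i = tt i * a i + n) U"
    using inf teq by (intro eventually_conj) auto
  then show "eventually (\<lambda>i. (p * a i < q * b i) = (0 < q)) U"
  proof (rule eventually_mono)
    fix i assume h: "m*p < tt i \<and> m * b i = tt i * a i + n"
    have "0 < a i" using ab(1)[of i] by simp
    then show "(p * a i < q * b i) = (0 < q)" using ar_c1_inf[of m "b i" "tt i" "a i" n p q] h m1 by auto
  qed
qed

lemma bdiv: "eventually (\<lambda>i. b i div a i = tt i div m) U"
proof -
  have "eventually (\<lambda>i. m * b i = tt i * a i + n \<and> n < a i) U"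
    using teq big by (rule eventually_conj)
  then show ?thesis by (rule eventually_mono) (use ar_bdiv[of m _ _ _ n] m1 in auto)
qed

lemma cmp2_fin:
  assumes k: "eventually (\<lambda>i. tt i = k) U"
  shows "eventually (\<lambda>i. p * b i < q * alpha_b (a i) (b i) + q * a i) U \<longleftrightarrow>
    p*k < m*q*(k div m + 1)"
proof (rule ev_iff_const[OF nb])
  have "eventually (\<lambda>i. tt i = k \<and> m * b i = tt i * a i + n \<and> p*n < a i \<and> b i div a i = tt i div m) U"
    using k teq big bdiv by (intro eventually_conj)
  then show "eventually (\<lambda>i. (p * b i < q * alpha_b (a i) (b i) + q * a i) = (p*k < m*q*(k div m + 1))) U"
    by (rule eventually_mono) (use ar_c2_fin[of m _ k _ n p q] m1 in \<open>auto simp: alpha_b_def\<close>)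
qed

lemma cmp2_inf:
  assumes inf: "\<forall>K. eventually (\<lambda>i. K < tt i) U"
  shows "eventually (\<lambda>i. p * b i < q * alpha_b (a i) (b i) + q * a i) U \<longleftrightarrow> (p \<le> q \<and> 0 < q)"
proof (rule ev_iff_const[OF nb])
  have "eventually (\<lambda>i. q*m < tt i \<and> m * b i = tt i * a i + n \<and> p*n < a i \<and> b i div a i = tt i div m) U"
    using inf teq big bdiv by (intro eventually_conj) auto
  then show "eventually (\<lambda>i. (p * b i < q * alpha_b (a i) (b i) + q * a i) = (p \<le> q \<and> 0 < q)) U"
    by (rule eventually_mono) (use ar_c2_inf[of m _ _ _ n q p] m1 in \<open>auto simp: alpha_b_def\<close>)
qed

lemma cmp3:
  assumes C: "eventually (\<lambda>i. cc i = C) U"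
  shows "eventually (\<lambda>i. p * beta (a i) (b i) 1 < q * (a i * b i)) U \<longleftrightarrow> p*C < n*q"
proof (rule ev_iff_const[OF nb])
  have "eventually (\<lambda>i. cc i = C \<and> n * K1 i = m + cc i * a i \<and> p*m < a i) U"
    using C nK big by (intro eventually_conj)
  then show "eventually (\<lambda>i. (p * beta (a i) (b i) 1 < q * (a i * b i)) = (p*C < n*q)) U"
  proof (rule eventually_mono)
    fix i assume h: "cc i = C \<and> n * K1 i = m + cc i * a i \<and> p*m < a i"
    have "0 < b i" using ab(2)[of i] by simp
    then show "(p * beta (a i) (b i) 1 < q * (a i * b i)) = (p*C < n*q)"
      unfolding K1(3) using ar_c3[of n "K1 i" m C "a i" p "b i" q] h n1 by auto
  qed
qed

lemma bmod: "eventually (\<lambda>i. b i mod N = ((tt i mod (m*N)) * (a i mod (m*N)) + n) mod (m*N) div m) U"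
  using teq by (rule eventually_mono) (use ar_m1[of m _ _ _ n N] m1 in auto)

lemma k1mod: "eventually (\<lambda>i. beta (a i) (b i) 1 div b i mod N =
   ((m + cc i * (a i mod (n*N))) mod (n*N)) div n) U"
  using nK by (rule eventually_mono) (use ar_m2[of n _ m _ _ N] n1 in \<open>auto simp: K1_def\<close>)

lemma wmod: "eventually (\<lambda>i. alpha (a i) (b i) 1 div a i mod N =
   ((m*(tt i mod (m*n*N)) + cc i*n + cc i*(tt i mod (m*n*N))*(a i mod (m*n*N))) mod (m*n*N)) div (m*n)) U"
proof -
  have "eventually (\<lambda>i. m * b i = tt i * a i + n \<and> n * K1 i = m + cc i * a i) U"
    using teq nK by (rule eventually_conj)
  then show ?thesis
  proof (rule eventually_mono)
    fix i assume h: "m * b i = tt i * a i + n \<and> n * K1 i = m + cc i * a i"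
    define w where "w = K1 i * b i div a i"
    have kb: "K1 i * b i = a i * w + 1" unfolding w_def using K1(2)[of i]
      by (metis div_mult_mod_eq mult.commute)
    have "alpha (a i) (b i) 1 = a i * w" unfolding alpha_def K1(3) kb by simp
    then have al: "alpha (a i) (b i) 1 div a i = w" using ab(1)[of i] by simp
    show "alpha (a i) (b i) 1 div a i mod N =
   ((m*(tt i mod (m*n*N)) + cc i*n + cc i*(tt i mod (m*n*N))*(a i mod (m*n*N))) mod (m*n*N)) div (m*n)"
      unfolding al using ar_m3[of m "b i" "tt i" "a i" n "K1 i" "cc i" w N] h kb m1 n1 ab(1)[of i] by auto
  qed
qed

lemma abmod: "eventually (\<lambda>i. alpha_b (a i) (b i) div a i = tt i div m) U"
  using bdiv by (rule eventually_mono) (use ab(1) in \<open>auto simp: alpha_b_def\<close>)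

end




theorem proposition5p3:
  fixes m n :: nat
    and U1 U2 :: "nat filter"
    and a1 b1 a2 b2 :: "nat \<Rightarrow> nat"
  assumes "1 \<le> m" and "1 \<le> n"
    and "limit2 U1 a1 b1" and "limit2 U2 a2 b2"
    and "eventually (\<lambda>i. m * b1 i = beta (a1 i) (b1 i) n) U1"
    and "eventually (\<lambda>i. m * b2 i = beta (a2 i) (b2 i) n) U2"
    and "coprime (ures U1 a1 m) m" and "coprime (ures U2 a2 m) m"
    and "\<forall>N\<ge>1. ures U1 a1 N = ures U2 a2 N"
    and "ratio U1 a1 b1 = ratio U2 a2 b2"
    and "ratio U1 a1 b1 = 0 \<longrightarrow>
         (\<forall>N\<ge>1. Ma_res U1 a1 (\<lambda>i. alpha_b (a1 i) (b1 i)) N =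
                 Ma_res U2 a2 (\<lambda>i. alpha_b (a2 i) (b2 i)) N)"
  shows
    "((\<forall>N\<ge>1. ures U1 b1 N = ures U2 b2 N) \<and>
      (\<forall>N\<ge>1. Mb_res U1 b1 (\<lambda>i. beta (a1 i) (b1 i) 1) N =
              Mb_res U2 b2 (\<lambda>i. beta (a2 i) (b2 i) 1) N) \<and>
      (\<forall>N\<ge>1. Ma_res U1 a1 (\<lambda>i. alpha (a1 i) (b1 i) 1) N =
              Ma_res U2 a2 (\<lambda>i. alpha (a2 i) (b2 i) 1) N) \<and>
      (\<forall>N\<ge>1. Ma_res U1 a1 (\<lambda>i. alpha_b (a1 i) (b1 i)) N =
              Ma_res U2 a2 (\<lambda>i. alpha_b (a2 i) (b2 i)) N) \<and>
      (\<forall>p q :: nat.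
         (eventually (\<lambda>i. p * a1 i < q * b1 i) U1 \<longleftrightarrow>
          eventually (\<lambda>i. p * a2 i < q * b2 i) U2) \<and>
         (eventually (\<lambda>i. p * b1 i < q * alpha_b (a1 i) (b1 i) + q * a1 i) U1 \<longleftrightarrow>
          eventually (\<lambda>i. p * b2 i < q * alpha_b (a2 i) (b2 i) + q * a2 i) U2) \<and>
         (eventually (\<lambda>i. p * beta (a1 i) (b1 i) 1 < q * (a1 i * b1 i)) U1 \<longleftrightarrow>
          eventually (\<lambda>i. p * beta (a2 i) (b2 i) 1 < q * (a2 i * b2 i)) U2)))
     \<and>
     (\<forall>(U :: nat filter) (a :: nat \<Rightarrow> nat) b.
        limit2 U a b \<and> eventually (\<lambda>i. m * b i = beta (a i) (b i) n) U \<and>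
        coprime (ures U a m) m \<longrightarrow>
        ratio U a b = 0 \<or> (\<exists>k::nat. 0 < k \<and> ratio U a b = real m / real k))"
proof -
  interpret I1: S2 m n U1 a1 b1 using assms by (simp add: S2_def)
  interpret I2: S2 m n U2 a2 b2 using assms by (simp add: S2_def)
  have m0: "0 < m" and n0: "0 < n" using assms(1,2) by auto
  have SEC: "\<forall>(U :: nat filter) (a :: nat \<Rightarrow> nat) b.
        limit2 U a b \<and> eventually (\<lambda>i. m * b i = beta (a i) (b i) n) U \<and>
        coprime (ures U a m) m \<longrightarrow>
        ratio U a b = 0 \<or> (\<exists>k::nat. 0 < k \<and> ratio U a b = real m / real k)"
  proof (intro allI impI)
    fix U :: "nat filter" and a b :: "nat \<Rightarrow> nat"
    assume h: "limit2 U a b \<and> eventually (\<lambda>i. m * b i = beta (a i) (b i) n) U \<and>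
        coprime (ures U a m) m"
    interpret S2 m n U a b using h assms(1,2) by (simp add: S2_def)
    show "ratio U a b = 0 \<or> (\<exists>k::nat. 0 < k \<and> ratio U a b = real m / real k)" by (rule second)
  qed
  have Aa: "\<exists>r. eventually (\<lambda>i. a1 i mod M = r) U1 \<and> eventually (\<lambda>i. a2 i mod M = r) U2"
    if M: "0 < M" for M
  proof -
    have "ures U1 a1 M = ures U2 a2 M" using assms(9) M by simp
    then show ?thesis using ures_eq[OF I1.uf M, of a1] ures_eq[OF I2.uf M, of a2] by auto
  qed
  have kinds: "(\<exists>k. eventually (\<lambda>i. I1.tt i = k) U1 \<and> eventually (\<lambda>i. I2.tt i = k) U2) \<or>
    ((\<forall>K. eventually (\<lambda>i. K < I1.tt i) U1) \<and> (\<forall>K. eventually (\<lambda>i. K < I2.tt i) U2))"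
  proof -
    have nz: "real m / real k \<noteq> 0" if "0 < k" for k using that m0 by simp
    from I1.t_cases show ?thesis
    proof
      assume "\<exists>k. eventually (\<lambda>i. I1.tt i = k) U1"
      then obtain k1 where k1: "eventually (\<lambda>i. I1.tt i = k1) U1" by blast
      from I2.t_cases show ?thesis
      proof
        assume "\<exists>k. eventually (\<lambda>i. I2.tt i = k) U2"
        then obtain k2 where k2: "eventually (\<lambda>i. I2.tt i = k2) U2" by blast
        have "real m / real k1 = real m / real k2"
          using I1.ratio_fin[OF k1] I2.ratio_fin[OF k2] assms(10) by auto
        then have "k1 = k2" using I1.ratio_fin(1)[OF k1] I2.ratio_fin(1)[OF k2] m0
          by (simp add: field_simps)
        then show ?thesis using k1 k2 by blast
      next
        assume "\<forall>K. eventually (\<lambda>i. K < I2.tt i) U2"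
        then show ?thesis using I1.ratio_fin[OF k1] I2.ratio_inf assms(10) nz by auto
      qed
    next
      assume inf1: "\<forall>K. eventually (\<lambda>i. K < I1.tt i) U1"
      from I2.t_cases show ?thesis
      proof
        assume "\<exists>k. eventually (\<lambda>i. I2.tt i = k) U2"
        then obtain k2 where k2: "eventually (\<lambda>i. I2.tt i = k2) U2" by blast
        then show ?thesis using I2.ratio_fin[OF k2] I1.ratio_inf[OF inf1] assms(10) nz by auto
      next
        assume "\<forall>K. eventually (\<lambda>i. K < I2.tt i) U2"
        then show ?thesis using inf1 by blast
      qed
    qed
  qed
  have At: "\<exists>r. eventually (\<lambda>i. I1.tt i mod M = r) U1 \<and> eventually (\<lambda>i. I2.tt i mod M = r) U2"
    if M: "0 < M" for M
    using kinds
  proof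
    assume "\<exists>k. eventually (\<lambda>i. I1.tt i = k) U1 \<and> eventually (\<lambda>i. I2.tt i = k) U2"
    then obtain k where k: "eventually (\<lambda>i. I1.tt i = k) U1" "eventually (\<lambda>i. I2.tt i = k) U2" by blast
    have "eventually (\<lambda>i. I1.tt i mod M = k mod M) U1" using k(1) by (rule eventually_mono) simp
    moreover have "eventually (\<lambda>i. I2.tt i mod M = k mod M) U2" using k(2) by (rule eventually_mono) simp
    ultimately show ?thesis by blast
  next
    assume inf: "(\<forall>K. eventually (\<lambda>i. K < I1.tt i) U1) \<and> (\<forall>K. eventually (\<lambda>i. K < I2.tt i) U2)"
    then have "ratio U1 a1 b1 = 0" using I1.ratio_inf by blast
    then have MA: "\<And>N. 1 \<le> N \<Longrightarrow> Ma_res U1 a1 (\<lambda>i. alpha_b (a1 i) (b1 i)) N =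
                 Ma_res U2 a2 (\<lambda>i. alpha_b (a2 i) (b2 i)) N" using assms(11) by blast
    define ra where "ra = ures U1 a1 m"
    have ra1: "eventually (\<lambda>i. a1 i mod m = ra) U1" unfolding ra_def using ures_eq[OF I1.uf m0] .
    have ra2: "eventually (\<lambda>i. a2 i mod m = ra) U2" unfolding ra_def
      using ures_eq[OF I2.uf m0, of a2] assms(9) m0 by simp
    have cra: "coprime ra m" unfolding ra_def using assms(7) .
    obtain s1 where s1: "s1 < m" "eventually (\<lambda>i. I1.tt i mod m = s1) U1"
      using uf_fin[OF I1.uf, of "\<lambda>i. I1.tt i mod m" m] m0 by auto
    obtain s2 where s2: "s2 < m" "eventually (\<lambda>i. I2.tt i mod m = s2) U2"
      using uf_fin[OF I2.uf, of "\<lambda>i. I2.tt i mod m" m] m0 by auto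
    have "eventually (\<lambda>i. (s1 * ra + n) mod m = 0) U1" using I1.tmodm ra1 s1(2) by eventually_elim simp
    then have e1: "(s1 * ra + n) mod m = 0" using I1.nb by (simp add: eventually_const_iff)
    have "eventually (\<lambda>i. (s2 * ra + n) mod m = 0) U2" using I2.tmodm ra2 s2(2) by eventually_elim simp
    then have e2: "(s2 * ra + n) mod m = 0" using I2.nb by (simp add: eventually_const_iff)
    have s12: "s1 = s2" using uniq_sol[OF cra e1 e2 s1(1) s2(1)] .
    define R where "R = Ma_res U1 a1 (\<lambda>i. alpha_b (a1 i) (b1 i)) M"
    have "eventually (\<lambda>i. alpha_b (a1 i) (b1 i) div a1 i mod M = R) U1"
      unfolding R_def Ma_res_def using ures_eq[OF I1.uf M] .
    then have R1: "eventually (\<lambda>i. I1.tt i div m mod M = R) U1" using I1.abmod by eventually_elim simp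
    have M1: "1 \<le> M" using M by simp
    have "R = ures U2 (\<lambda>i. alpha_b (a2 i) (b2 i) div a2 i) M"
      using MA[OF M1] unfolding R_def Ma_res_def by simp
    then have "eventually (\<lambda>i. alpha_b (a2 i) (b2 i) div a2 i mod M = R) U2"
      using ures_eq[OF I2.uf M, of "\<lambda>i. alpha_b (a2 i) (b2 i) div a2 i"] by simp
    then have R2: "eventually (\<lambda>i. I2.tt i div m mod M = R) U2" using I2.abmod by eventually_elim simp
    have "eventually (\<lambda>i. I1.tt i mod M = (m * R + s1) mod M) U1"
      using R1 s1(2) by eventually_elim (metis ar_tmod)
    moreover have "eventually (\<lambda>i. I2.tt i mod M = (m * R + s1) mod M) U2"
      using R2 s2(2) by eventually_elim (metis ar_tmod s12)
    ultimately show ?thesis by blast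
  qed
  have Ac: "\<exists>C. eventually (\<lambda>i. I1.cc i = C) U1 \<and> eventually (\<lambda>i. I2.cc i = C) U2"
  proof -
    define rn where "rn = ures U1 a1 n"
    have rn1: "eventually (\<lambda>i. a1 i mod n = rn) U1" unfolding rn_def using ures_eq[OF I1.uf n0] .
    have rn2: "eventually (\<lambda>i. a2 i mod n = rn) U2" unfolding rn_def
      using ures_eq[OF I2.uf n0, of a2] assms(9) n0 by simp
    have "eventually (\<lambda>i. coprime rn n) U1" using I1.copn rn1 by eventually_elim (use n0 in auto)
    then have crn: "coprime rn n" using I1.nb by (simp add: eventually_const_iff)
    obtain C1 where C1: "C1 < n" "eventually (\<lambda>i. I1.cc i = C1) U1"
      using uf_fin[OF I1.uf, of "I1.cc" n] I1.cc_lt by auto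
    obtain C2 where C2: "C2 < n" "eventually (\<lambda>i. I2.cc i = C2) U2"
      using uf_fin[OF I2.uf, of "I2.cc" n] I2.cc_lt by auto
    have "eventually (\<lambda>i. (C1 * rn + m) mod n = 0) U1" using I1.ccmod rn1 C1(2) by eventually_elim simp
    then have e1: "(C1 * rn + m) mod n = 0" using I1.nb by (simp add: eventually_const_iff)
    have "eventually (\<lambda>i. (C2 * rn + m) mod n = 0) U2" using I2.ccmod rn2 C2(2) by eventually_elim simp
    then have e2: "(C2 * rn + m) mod n = 0" using I2.nb by (simp add: eventually_const_iff)
    have "C1 = C2" using uniq_sol[OF crn e1 e2 C1(1) C2(1)] .
    then show ?thesis using C1 C2 by blast
  qed
  then obtain C where C: "eventually (\<lambda>i. I1.cc i = C) U1" "eventually (\<lambda>i. I2.cc i = C) U2" by blast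
  have P1: "\<forall>N\<ge>1. ures U1 b1 N = ures U2 b2 N"
  proof (intro allI impI)
    fix N :: nat assume "1 \<le> N"
    then have N: "0 < m*N" "0 < N" using m0 by auto
    obtain rt where rt: "eventually (\<lambda>i. I1.tt i mod (m*N) = rt) U1" "eventually (\<lambda>i. I2.tt i mod (m*N) = rt) U2"
      using At[OF N(1)] by blast
    obtain ra where ra: "eventually (\<lambda>i. a1 i mod (m*N) = ra) U1" "eventually (\<lambda>i. a2 i mod (m*N) = ra) U2"
      using Aa[OF N(1)] by blast
    have "eventually (\<lambda>i. b1 i mod N = (rt * ra + n) mod (m*N) div m) U1"
      using I1.bmod[of N] rt(1) ra(1) by eventually_elim simp
    moreover have "eventually (\<lambda>i. b2 i mod N = (rt * ra + n) mod (m*N) div m) U2"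
      using I2.bmod[of N] rt(2) ra(2) by eventually_elim simp
    ultimately show "ures U1 b1 N = ures U2 b2 N" using ures_same[OF I1.nb I2.nb] N(2) by blast
  qed
  have P2: "\<forall>N\<ge>1. Mb_res U1 b1 (\<lambda>i. beta (a1 i) (b1 i) 1) N =
              Mb_res U2 b2 (\<lambda>i. beta (a2 i) (b2 i) 1) N"
  proof (intro allI impI)
    fix N :: nat assume "1 \<le> N"
    then have N: "0 < n*N" "0 < N" using n0 by auto
    obtain ra where ra: "eventually (\<lambda>i. a1 i mod (n*N) = ra) U1" "eventually (\<lambda>i. a2 i mod (n*N) = ra) U2"
      using Aa[OF N(1)] by blast
    have "eventually (\<lambda>i. beta (a1 i) (b1 i) 1 div b1 i mod N = ((m + C * ra) mod (n*N)) div n) U1"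
      using I1.k1mod[of N] C(1) ra(1) by eventually_elim simp
    moreover have "eventually (\<lambda>i. beta (a2 i) (b2 i) 1 div b2 i mod N = ((m + C * ra) mod (n*N)) div n) U2"
      using I2.k1mod[of N] C(2) ra(2) by eventually_elim simp
    ultimately show "Mb_res U1 b1 (\<lambda>i. beta (a1 i) (b1 i) 1) N =
              Mb_res U2 b2 (\<lambda>i. beta (a2 i) (b2 i) 1) N"
      unfolding Mb_res_def by (rule ures_same[OF I1.nb I2.nb _ _ N(2)])
  qed
  have P3: "\<forall>N\<ge>1. Ma_res U1 a1 (\<lambda>i. alpha (a1 i) (b1 i) 1) N =
              Ma_res U2 a2 (\<lambda>i. alpha (a2 i) (b2 i) 1) N"
  proof (intro allI impI)
    fix N :: nat assume "1 \<le> N"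
    then have N: "0 < m*n*N" "0 < N" using m0 n0 by auto
    obtain rt where rt: "eventually (\<lambda>i. I1.tt i mod (m*n*N) = rt) U1" "eventually (\<lambda>i. I2.tt i mod (m*n*N) = rt) U2"
      using At[OF N(1)] by blast
    obtain ra where ra: "eventually (\<lambda>i. a1 i mod (m*n*N) = ra) U1" "eventually (\<lambda>i. a2 i mod (m*n*N) = ra) U2"
      using Aa[OF N(1)] by blast
    have "eventually (\<lambda>i. alpha (a1 i) (b1 i) 1 div a1 i mod N = ((m*rt + C*n + C*rt*ra) mod (m*n*N)) div (m*n)) U1"
      using I1.wmod[of N] C(1) rt(1) ra(1) by eventually_elim simp
    moreover have "eventually (\<lambda>i. alpha (a2 i) (b2 i) 1 div a2 i mod N = ((m*rt + C*n + C*rt*ra) mod (m*n*N)) div (m*n)) U2"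
      using I2.wmod[of N] C(2) rt(2) ra(2) by eventually_elim simp
    ultimately show "Ma_res U1 a1 (\<lambda>i. alpha (a1 i) (b1 i) 1) N =
              Ma_res U2 a2 (\<lambda>i. alpha (a2 i) (b2 i) 1) N"
      unfolding Ma_res_def by (rule ures_same[OF I1.nb I2.nb _ _ N(2)])
  qed
  have P4: "\<forall>N\<ge>1. Ma_res U1 a1 (\<lambda>i. alpha_b (a1 i) (b1 i)) N =
              Ma_res U2 a2 (\<lambda>i. alpha_b (a2 i) (b2 i)) N"
  proof (intro allI impI)
    fix N :: nat assume "1 \<le> N"
    then have N: "0 < m*N" "0 < N" using m0 by auto
    obtain rt where rt: "eventually (\<lambda>i. I1.tt i mod (m*N) = rt) U1" "eventually (\<lambda>i. I2.tt i mod (m*N) = rt) U2"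
      using At[OF N(1)] by blast
    have "eventually (\<lambda>i. alpha_b (a1 i) (b1 i) div a1 i mod N = rt div m) U1"
      using I1.abmod rt(1) by eventually_elim (simp add: ar_m4)
    moreover have "eventually (\<lambda>i. alpha_b (a2 i) (b2 i) div a2 i mod N = rt div m) U2"
      using I2.abmod rt(2) by eventually_elim (simp add: ar_m4)
    ultimately show "Ma_res U1 a1 (\<lambda>i. alpha_b (a1 i) (b1 i)) N =
              Ma_res U2 a2 (\<lambda>i. alpha_b (a2 i) (b2 i)) N"
      unfolding Ma_res_def by (rule ures_same[OF I1.nb I2.nb _ _ N(2)])
  qed
  have P5: "\<forall>p q :: nat.
         (eventually (\<lambda>i. p * a1 i < q * b1 i) U1 \<longleftrightarrow>
          eventually (\<lambda>i. p * a2 i < q * b2 i) U2) \<and>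
         (eventually (\<lambda>i. p * b1 i < q * alpha_b (a1 i) (b1 i) + q * a1 i) U1 \<longleftrightarrow>
          eventually (\<lambda>i. p * b2 i < q * alpha_b (a2 i) (b2 i) + q * a2 i) U2) \<and>
         (eventually (\<lambda>i. p * beta (a1 i) (b1 i) 1 < q * (a1 i * b1 i)) U1 \<longleftrightarrow>
          eventually (\<lambda>i. p * beta (a2 i) (b2 i) 1 < q * (a2 i * b2 i)) U2)"
  proof (intro allI)
    fix p q :: nat
    have c3: "eventually (\<lambda>i. p * beta (a1 i) (b1 i) 1 < q * (a1 i * b1 i)) U1 \<longleftrightarrow>
          eventually (\<lambda>i. p * beta (a2 i) (b2 i) 1 < q * (a2 i * b2 i)) U2"
      using I1.cmp3[OF C(1)] I2.cmp3[OF C(2)] by simp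
    from kinds show "(eventually (\<lambda>i. p * a1 i < q * b1 i) U1 \<longleftrightarrow>
          eventually (\<lambda>i. p * a2 i < q * b2 i) U2) \<and>
         (eventually (\<lambda>i. p * b1 i < q * alpha_b (a1 i) (b1 i) + q * a1 i) U1 \<longleftrightarrow>
          eventually (\<lambda>i. p * b2 i < q * alpha_b (a2 i) (b2 i) + q * a2 i) U2) \<and>
         (eventually (\<lambda>i. p * beta (a1 i) (b1 i) 1 < q * (a1 i * b1 i)) U1 \<longleftrightarrow>
          eventually (\<lambda>i. p * beta (a2 i) (b2 i) 1 < q * (a2 i * b2 i)) U2)"
    proof
      assume "\<exists>k. eventually (\<lambda>i. I1.tt i = k) U1 \<and> eventually (\<lambda>i. I2.tt i = k) U2"
      then obtain k where k: "eventually (\<lambda>i. I1.tt i = k) U1" "eventually (\<lambda>i. I2.tt i = k) U2" by blast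
      show ?thesis using I1.cmp1_fin[OF k(1)] I2.cmp1_fin[OF k(2)] I1.cmp2_fin[OF k(1)] I2.cmp2_fin[OF k(2)] c3
        by simp
    next
      assume inf: "(\<forall>K. eventually (\<lambda>i. K < I1.tt i) U1) \<and> (\<forall>K. eventually (\<lambda>i. K < I2.tt i) U2)"
      show ?thesis using I1.cmp1_inf I2.cmp1_inf I1.cmp2_inf I2.cmp2_inf inf c3
        by simp
    qed
  qed
  show ?thesis using P1 P2 P3 P4 P5 SEC by blast
qed


end
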